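(* Let $n\ge2$ and $1\le j\le n+2$ be integers. For every $\lambda\in[1/n,\infty)$, $$\frac{\lambda}{(1+\lambda)^{j-1}}\le\lambda_{n,j}(\lambda)=\widehat\lambda_{n,j-1}(\lambda)\le\lambda^{2-j}$$ (for $j=1$ only the outer inequalities are meant). In particular, if $j\ge3$ then $\lambda_{n,j}(\lambda)\to0$ as $\lambda\to\infty$.
   Context: For an integer $n\ge1$ let $f_n(x)=(1+x)^{n+1}/x$ for $x>0$. The function $f_n$ is strictly decreasing on $(0,1/n]$ and strictly increasing on $[1/n,\infty)$. Regular graph exponents (Schmidt–Summerer), defined algebraically. For $\lambda\in[1/n,\infty)$ let $\mu\in(0,1/n]$ be the unique solution of $f_n(\mu)=f_n(\lambda)$, and set $$\lambda_{n,j}(\lambda)=\lambda^{1-\frac{j-1}{n+1}}\mu^{\frac{j-1}{n+1}},\qquad 1\le j\le n+2 .$$ All ratios $\lambda_{n,j}/\lambda_{n,j+1}$ are equal. Put $\widehat\lambda_{n,j}(\lambda):=\lambda_{n,j+1}(\lambda)$ for $1\le j\le n+1$. These are the simultaneous approximation exponents of the regular graph in dimension $n$ with parameter $\lambda_n=\lambda$. In particular $\lambda_{n,2}(\lambda)=\widehat\lambda_n(\lambda)\le 1$. *)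

theory Defs
  imports Complex_Main
begin

definition fn :: "nat \<Rightarrow> real \<Rightarrow> real" where
  "fn n x = (1 + x) ^ (n + 1) / x"

definition mu_reg :: "nat \<Rightarrow> real \<Rightarrow> real" where
  "mu_reg n lam = (THE m. 0 < m \<and> m \<le> 1 / real n \<and> fn n m = fn n lam)"

definition lam_reg :: "nat \<Rightarrow> nat \<Rightarrow> real \<Rightarrow> real" where
  "lam_reg n j lam =
     lam powr (1 - (real j - 1) / (real n + 1)) * mu_reg n lam powr ((real j - 1) / (real n + 1))"

definition hatlam_reg :: "nat \<Rightarrow> nat \<Rightarrow> real \<Rightarrow> real" where
  "hatlam_reg n j lam = lam_reg n (j + 1) lam"

end

theory Submission imports Defs begin

lemma fn_deriv:
  assumes "x > 0"
  shows "(fn n has_real_derivative (1+x)^n*(real n*x-1)/x^2) (at x)"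
proof -
  have "((\<lambda>x. (1 + x) ^ (n + 1) / x) has_real_derivative
         ((real (n+1)*(1+x)^n*1)*x - (1+x)^(n+1)*1)/(x*x)) (at x)"
    using assms by (intro derivative_eq_intros DERIV_quotient) auto
  moreover have "((real (n+1)*(1+x)^n*1)*x - (1+x)^(n+1)*1)/(x*x) = (1+x)^n*(real n*x-1)/x^2"
    using assms by (simp add: field_simps power2_eq_square)
  ultimately show ?thesis unfolding fn_def[abs_def] by simp
qed

lemma fn_cont: "x > 0 \<Longrightarrow> isCont (fn n) x"
  using fn_deriv DERIV_isCont by blast

lemma fn_cont_on: "0 < a \<Longrightarrow> continuous_on {a..b} (fn n)"
  by (intro continuous_at_imp_continuous_on ballI fn_cont) auto

lemma fn_dec:
  assumes "n \<ge> 1" "0 < a" "a < b" "b \<le> 1 / real n"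
  shows "fn n b < fn n a"
proof (rule DERIV_neg_imp_decreasing_open[OF assms(3) _ fn_cont_on[OF assms(2)]])
  fix x assume x: "a < x" "x < b"
  have "real n * x < real n * (1/real n)" using x assms by (intro mult_strict_left_mono) auto
  then have "real n * x - 1 < 0" using assms by simp
  moreover have "(1+x)^n > 0" "x^2 > 0" using x assms by auto
  ultimately have "(1+x)^n*(real n*x-1)/x^2 < 0"
    by (simp add: divide_neg_pos mult_pos_neg)
  then show "\<exists>y. DERIV (fn n) x :> y \<and> y < 0" using fn_deriv[of x n] x assms by auto
qed

lemma fn_inc:
  assumes "n \<ge> 1" "1 / real n \<le> a" "a \<le> b"
  shows "fn n a \<le> fn n b"
proof (rule DERIV_nonneg_imp_increasing_open[OF assms(3) _ fn_cont_on])
  fix x assume x: "a < x" "x < b"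
  have "0 < 1 / real n" using assms by simp
  have "real n * (1/real n) \<le> real n * x" using x assms by (intro mult_left_mono) auto
  then have "real n * x - 1 \<ge> 0" using assms by simp
  have xp: "x > 0" using x assms \<open>0 < 1 / real n\<close> by linarith
  have "(1+x)^n*(real n*x-1)/x^2 \<ge> 0"
    using xp \<open>real n * x - 1 \<ge> 0\<close> by (intro divide_nonneg_pos mult_nonneg_nonneg) auto
  then show "\<exists>y. DERIV (fn n) x :> y \<and> y \<ge> 0" using fn_deriv[of x n] xp by blast
next
  have "0 < 1 / real n" using assms by simp
  then show "0 < a" using assms by linarith
qed

lemma fn_pos: "x > 0 \<Longrightarrow> fn n x > 0" by (simp add: fn_def)

lemma mu_props:
  assumes n: "n \<ge> 1" and lam: "1 / real n \<le> lam"
  shows "0 < mu_reg n lam \<and> mu_reg n lam \<le> 1 / real n \<and> fn n (mu_reg n lam) = fn n lam"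
proof -
  have np: "0 < 1 / real n" using n by simp
  have lp: "lam > 0" using np lam by linarith
  define y where "y = fn n lam"
  have yp: "y > 0" using fn_pos lp y_def by simp
  define e where "e = min (1/real n) (1/y)"
  have ep: "e > 0" using np yp e_def by simp
  have "fn n e \<ge> 1 / e"
  proof -
    have "(1+e)^(n+1) \<ge> 1" using ep by (intro one_le_power) simp
    then show ?thesis unfolding fn_def using ep by (simp add: divide_right_mono)
  qed
  moreover have "1 / e \<ge> y" using ep yp unfolding e_def
    by (cases "1/real n \<le> 1/y") (auto simp: min_def field_simps)
  ultimately have y1: "y \<le> fn n e" by simp
  have y2: "fn n (1/real n) \<le> y" using fn_inc[OF n order_refl lam] y_def by simp
  have "e \<le> 1 / real n" by (simp add: e_def)
  from IVT2[OF y2 y1 this] ep obtain m where m: "e \<le> m" "m \<le> 1/real n" "fn n m = y"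
    using fn_cont by (smt (verit))
  have ex: "\<exists>!m. 0 < m \<and> m \<le> 1 / real n \<and> fn n m = fn n lam"
  proof (rule ex1I[of _ m])
    show "0 < m \<and> m \<le> 1 / real n \<and> fn n m = fn n lam" using m ep y_def by auto
  next
    fix m' assume h: "0 < m' \<and> m' \<le> 1 / real n \<and> fn n m' = fn n lam"
    show "m' = m"
    proof (rule ccontr)
      assume "m' \<noteq> m"
      then consider "m' < m" | "m < m'" by linarith
      then show False
        using fn_dec[OF n, of m' m] fn_dec[OF n, of m m'] h m ep y_def by (cases) auto
    qed
  qed
  show ?thesis unfolding mu_reg_def using theI'[OF ex] .
qed

lemma lam_mu_le:
  assumes n: "n \<ge> 1" and lam: "1 / real n \<le> lam"
  shows "lam * mu_reg n lam \<le> 1"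
proof -
  have np: "0 < 1 / real n" using n by simp
  have lp: "lam > 0" using np lam by linarith
  note mp = mu_props[OF n lam]
  show ?thesis
  proof (cases "lam \<ge> real n")
    case True
    have il: "1/lam \<le> 1 / real n" using True n by (simp add: frac_le)
    have "fn n (1/lam) \<le> fn n lam"
    proof -
      have "fn n (1/lam) = (1+lam)^(n+1) / lam^n" unfolding fn_def using lp
        by (simp add: field_simps power_divide)
      also have "\<dots> \<le> (1+lam)^(n+1) / lam"
      proof (rule divide_left_mono)
        have "lam \<ge> 1" using True n by linarith
        then have "lam^1 \<le> lam^n" using n by (intro power_increasing) auto
        then show "lam \<le> lam^n" by simp
      qed (use lp in auto)
      finally show ?thesis unfolding fn_def .
    qed
    show ?thesis
    proof (rule ccontr)
      assume "\<not> ?thesis"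
      then have "mu_reg n lam > 1/lam" using lp by (simp add: field_simps)
      from fn_dec[OF n _ this] mp lp have "fn n (mu_reg n lam) < fn n (1/lam)" by simp
      with mp \<open>fn n (1/lam) \<le> fn n lam\<close> show False by simp
    qed
  next
    case False
    then have "1 / real n < 1 / lam" using lp by (simp add: frac_less2)
    then have "mu_reg n lam < 1/lam" using mp by linarith
    then show ?thesis using lp by (simp add: field_simps)
  qed
qed

lemma lam_reg_eq:
  assumes n: "n \<ge> 1" and lam: "1 / real n \<le> lam" and j: "j \<ge> 1"
  shows "lam_reg n j lam = lam * ((1 + mu_reg n lam) / (1 + lam)) ^ (j - 1)"
proof -
  have np: "0 < 1 / real n" using n by simp
  have lp: "lam > 0" using np lam by linarith
  note mp = mu_props[OF n lam]
  define m where "m = mu_reg n lam"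
  define q where "q = (1 + m) / (1 + lam)"
  have mpos: "m > 0" using mp m_def by simp
  have qpos: "q > 0" using mpos lp q_def by simp
  have "(1+m)^(n+1)/m = (1+lam)^(n+1)/lam" using mp m_def unfolding fn_def by simp
  then have e1: "m * (1+lam)^(n+1) = lam * (1+m)^(n+1)" using mpos lp
    by (simp add: divide_eq_eq eq_divide_eq mult.commute)
  have pp: "(1+lam)^(n+1) > 0" using lp by simp
  have "m = lam * (1+m)^(n+1) / (1+lam)^(n+1)" using e1 pp lp by (simp add: eq_divide_eq)
  then have "m = lam * q^(n+1)" unfolding q_def by (simp add: power_divide)
  define e where "e = (real j - 1) / (real n + 1)"
  have "m powr e = lam powr e * (q^(n+1)) powr e"
    using \<open>m = lam * q^(n+1)\<close> lp qpos by (simp add: powr_mult)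
  also have "(q^(n+1)) powr e = q powr (real (n+1) * e)"
  proof -
    have "q^(n+1) = q powr real (n+1)" using qpos by (simp only: powr_realpow)
    then show ?thesis by (simp only: powr_powr)
  qed
  also have "real (n+1) * e = real (j - 1)" unfolding e_def using j
    by (simp add: of_nat_diff add.commute[of 1 "real n"])
  also have "q powr real (j-1) = q^(j-1)" using qpos by (simp add: powr_realpow)
  finally have "m powr e = lam powr e * q^(j-1)" .
  then have "lam_reg n j lam = lam powr (1 - e) * lam powr e * q^(j-1)"
    unfolding lam_reg_def e_def m_def by simp
  also have "lam powr (1 - e) * lam powr e = lam" using lp by (simp add: powr_add[symmetric])
  finally show ?thesis unfolding q_def m_def .
qed

theorem proposition2p4:
  fixes n j :: nat
  assumes "n \<ge> 2" and "1 \<le> j" and "j \<le> n + 2"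
  shows "(\<forall>lam::real. lam \<ge> 1 / real n \<longrightarrow>
            lam / (1 + lam) ^ (j - 1) \<le> lam_reg n j lam
          \<and> lam_reg n j lam \<le> lam powr (2 - real j)
          \<and> (j \<ge> 2 \<longrightarrow> lam_reg n j lam = hatlam_reg n (j - 1) lam))
       \<and> (j \<ge> 3 \<longrightarrow> ((\<lambda>lam. lam_reg n j lam) \<longlongrightarrow> 0) at_top)"
proof -
  have n: "n \<ge> 1" using assms by simp
  have bounds: "lam / (1 + lam) ^ (j - 1) \<le> lam_reg n j lam
          \<and> lam_reg n j lam \<le> lam / lam ^ (j - 1) \<and> lam_reg n j lam \<le> lam powr (2 - real j)"
    if lam: "1 / real n \<le> lam" for lam
  proof -
    have np: "0 < 1 / real n" using n by simp
    have lp: "lam > 0" using np lam by linarith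
    note mp = mu_props[OF n lam]
    define m where "m = mu_reg n lam"
    define q where "q = (1 + m) / (1 + lam)"
    have eq: "lam_reg n j lam = lam * q^(j-1)" using lam_reg_eq[OF n lam assms(2)] q_def m_def by simp
    have q1: "1 / (1+lam) \<le> q" unfolding q_def using mp m_def lp by (simp add: divide_right_mono)
    have "lam * m \<le> 1" using lam_mu_le[OF n lam] m_def by simp
    then have q2: "q \<le> 1 / lam" unfolding q_def using lp by (simp add: field_simps)
    have "(1/(1+lam))^(j-1) \<le> q^(j-1)" using q1 lp by (intro power_mono) auto
    then have "lam * (1/(1+lam))^(j-1) \<le> lam * q^(j-1)" using lp by (intro mult_left_mono) auto
    then have L: "lam / (1 + lam) ^ (j - 1) \<le> lam_reg n j lam"
      using eq by (simp add: power_divide)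
    have "q^(j-1) \<le> (1/lam)^(j-1)" using q2 q1 lp
      by (intro power_mono) (auto intro: order_trans[rotated])
    then have "lam * q^(j-1) \<le> lam * (1/lam)^(j-1)" using lp by (intro mult_left_mono) auto
    then have U: "lam_reg n j lam \<le> lam / lam ^ (j - 1)"
      using eq by (simp add: power_divide)
    have "lam powr (2 - real j) = lam powr (1 - real (j-1))" using assms(2) by (simp add: of_nat_diff)
    also have "\<dots> = lam / lam ^ (j-1)" using lp by (simp add: powr_diff powr_realpow)
    finally show ?thesis using L U by simp
  qed
  have part1: "\<forall>lam::real. lam \<ge> 1 / real n \<longrightarrow>
            lam / (1 + lam) ^ (j - 1) \<le> lam_reg n j lam
          \<and> lam_reg n j lam \<le> lam powr (2 - real j)
          \<and> (j \<ge> 2 \<longrightarrow> lam_reg n j lam = hatlam_reg n (j - 1) lam)"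
    using bounds by (auto simp: hatlam_reg_def)
  have part2: "((\<lambda>lam. lam_reg n j lam) \<longlongrightarrow> 0) at_top" if j3: "j \<ge> 3"
  proof (rule tendsto_sandwich[of "\<lambda>_. 0" _ _ "\<lambda>lam. inverse lam"])
    have ev: "eventually (\<lambda>lam. lam \<ge> max 1 (1 / real n)) at_top" by (rule eventually_ge_at_top)
    show "eventually (\<lambda>lam. 0 \<le> lam_reg n j lam) at_top"
      using ev
    proof (rule eventually_mono)
      fix lam :: real assume h: "max 1 (1 / real n) \<le> lam"
      then have "lam / (1 + lam) ^ (j - 1) \<le> lam_reg n j lam" using bounds by simp
      moreover have "0 \<le> lam / (1 + lam) ^ (j - 1)" using h by simp
      ultimately show "0 \<le> lam_reg n j lam" by linarith
    qed
    show "eventually (\<lambda>lam. lam_reg n j lam \<le> inverse lam) at_top"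
      using ev
    proof (rule eventually_mono)
      fix lam :: real assume h: "max 1 (1 / real n) \<le> lam"
      then have a: "lam_reg n j lam \<le> lam / lam ^ (j - 1)" using bounds by simp
      have l1: "lam \<ge> 1" using h by simp
      have "lam^2 \<le> lam^(j-1)" using l1 j3 by (intro power_increasing) auto
      then have "lam / lam ^ (j - 1) \<le> lam / lam^2" using l1
        by (intro divide_left_mono) auto
      also have "\<dots> = inverse lam" using l1 by (simp add: power2_eq_square field_simps)
      finally show "lam_reg n j lam \<le> inverse lam" using a by linarith
    qed
    show "((\<lambda>_. 0::real) \<longlongrightarrow> 0) at_top" by simp
    show "((\<lambda>lam::real. inverse lam) \<longlongrightarrow> 0) at_top"
      by (rule tendsto_inverse_0_at_top[OF filterlim_ident])
  qed
  show ?thesis using part1 part2 by blast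
qed

end
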